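(* Let $\mathbf{A}\in\mathsf{K}$. Then the following hold. (i) The $\{\wedge,\vee,\neg,0,1\}$-reduct of $\mathbf{A}$ is an involutive bisemilattice. (ii) All homomorphisms $p_{ij}$ in the Płonka sum representation of this reduct are surjective. (iii) Suppose the lowest fibre $\mathbf{A}_0$ is a two-element Boolean algebra. Then there is a unique unary operation $J_2$ on the reduct turning it into a member of $\mathsf{K}$, namely: $J_2a=1$ if $a=1_i$ (the top of fibre $\mathbf{A}_i$) for some $i\in I^+$, and $J_2a=0$ otherwise. Here $I^+=\{i\in I:|A_i|>1\}$.
   Context: $\mathsf{K}$ is the variety of type $\langle\wedge,\vee,\neg,J_2,0,1\rangle$ axiomatised by: - $x\vee x\approx x$; - $x\vee y\approx y\vee x$; - $x\vee(y\vee z)\approx(x\vee y)\vee z$; - $\neg\neg x\approx x$; - $x\wedge y\approx\neg(\neg x\vee\neg y)$; - $x\wedge(\neg x\vee y)\approx x\wedge y$; - $0\vee x\approx x$; - $1\approx\neg0$; - $J_2x\vee\neg J_2x\approx1$; - $x\vee J_2y\approx x\vee J_2(x\vee y)$; - $x\wedge J_2x\approx x$; - $J_2(x\wedge\neg x)\approx0$. An involutive bisemilattice is an algebra $\langle A,\wedge,\vee,\neg,0,1\rangle$ satisfying the first eight identities. Equivalently, it is an algebra isomorphic to a Płonka sum of Boolean algebras. Such a sum is built from: - a join-semilattice $\langle I,\vee,0\rangle$ with least element $0$; - pairwise disjoint Boolean algebras $\mathbf{A}_i$ (fibres); - homomorphisms $p_{ij}:\mathbf{A}_i\to\mathbf{A}_j$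 for $i\le j$, with $p_{ii}=\mathrm{id}$ and $p_{jk}p_{ij}=p_{ik}$. Its universe is $\bigsqcup A_i$. Operations are computed by pushing the arguments via the $p$'s to the fibre indexed by the join of their indices; constants come from $\mathbf{A}_0$. This representation is canonical: $a,b$ lie in the same fibre iff $a\wedge(a\vee b)=a$ and $b\wedge(b\vee a)=b$. Also $p_{ij}(a)=a\wedge(a\vee b)$ for any $b\in A_j$. A fibre is trivial if it is a singleton. *)

theory Defs
  imports Main
begin

definition inv_bisemilattice ::
  "'a set \<Rightarrow> ('a \<Rightarrow> 'a \<Rightarrow> 'a) \<Rightarrow> ('a \<Rightarrow> 'a \<Rightarrow> 'a) \<Rightarrow> ('a \<Rightarrow> 'a) \<Rightarrow> 'a \<Rightarrow> 'a \<Rightarrow> bool"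
  where "inv_bisemilattice A meet join neg zero one \<longleftrightarrow>
    zero \<in> A \<and> one \<in> A \<and>
    (\<forall>x\<in>A. \<forall>y\<in>A. meet x y \<in> A \<and> join x y \<in> A) \<and> (\<forall>x\<in>A. neg x \<in> A) \<and>
    (\<forall>x\<in>A. join x x = x) \<and>
    (\<forall>x\<in>A. \<forall>y\<in>A. join x y = join y x) \<and>
    (\<forall>x\<in>A. \<forall>y\<in>A. \<forall>z\<in>A. join x (join y z) = join (join x y) z) \<and>
    (\<forall>x\<in>A. neg (neg x) = x) \<and>
    (\<forall>x\<in>A. \<forall>y\<in>A. meet x y = neg (join (neg x) (neg y))) \<and>
    (\<forall>x\<in>A. \<forall>y\<in>A. meet x (join (neg x) y) = meet x y) \<and>
    (\<forall>x\<in>A. join zero x = x) \<and>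
    one = neg zero"

definition K_alg ::
  "'a set \<Rightarrow> ('a \<Rightarrow> 'a \<Rightarrow> 'a) \<Rightarrow> ('a \<Rightarrow> 'a \<Rightarrow> 'a) \<Rightarrow> ('a \<Rightarrow> 'a) \<Rightarrow> ('a \<Rightarrow> 'a) \<Rightarrow> 'a \<Rightarrow> 'a \<Rightarrow> bool"
  where "K_alg A meet join neg J zero one \<longleftrightarrow>
    zero \<in> A \<and> one \<in> A \<and>
    (\<forall>x\<in>A. \<forall>y\<in>A. meet x y \<in> A \<and> join x y \<in> A) \<and> (\<forall>x\<in>A. neg x \<in> A) \<and>
    (\<forall>x\<in>A. J x \<in> A) \<and>
    (\<forall>x\<in>A. join x x = x) \<and>
    (\<forall>x\<in>A. \<forall>y\<in>A. join x y = join y x) \<and>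
    (\<forall>x\<in>A. \<forall>y\<in>A. \<forall>z\<in>A. join x (join y z) = join (join x y) z) \<and>
    (\<forall>x\<in>A. neg (neg x) = x) \<and>
    (\<forall>x\<in>A. \<forall>y\<in>A. meet x y = neg (join (neg x) (neg y))) \<and>
    (\<forall>x\<in>A. \<forall>y\<in>A. meet x (join (neg x) y) = meet x y) \<and>
    (\<forall>x\<in>A. join zero x = x) \<and>
    one = neg zero \<and>
    (\<forall>x\<in>A. join (J x) (neg (J x)) = one) \<and>
    (\<forall>x\<in>A. \<forall>y\<in>A. join x (J y) = join x (J (join x y))) \<and>
    (\<forall>x\<in>A. meet x (J x) = x) \<and>
    (\<forall>x\<in>A. J (meet x (neg x)) = zero)"

definition same_fibre :: "('a \<Rightarrow> 'a \<Rightarrow> 'a) \<Rightarrow> ('a \<Rightarrow> 'a \<Rightarrow> 'a) \<Rightarrow> 'a \<Rightarrow> 'a \<Rightarrow> bool"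
  where "same_fibre meet join a b \<longleftrightarrow> meet a (join a b) = a \<and> meet b (join b a) = b"

text \<open>The fibre of a lies below the fibre of b in the index semilattice
  (i \<le> j iff i \<or> j = j, and the index of a \<or> b is the join of the indices).\<close>
definition fibre_le :: "('a \<Rightarrow> 'a \<Rightarrow> 'a) \<Rightarrow> ('a \<Rightarrow> 'a \<Rightarrow> 'a) \<Rightarrow> 'a \<Rightarrow> 'a \<Rightarrow> bool"
  where "fibre_le meet join a b \<longleftrightarrow> same_fibre meet join (join a b) b"

definition fibre :: "'a set \<Rightarrow> ('a \<Rightarrow> 'a \<Rightarrow> 'a) \<Rightarrow> ('a \<Rightarrow> 'a \<Rightarrow> 'a) \<Rightarrow> 'a \<Rightarrow> 'a set"
  where "fibre A meet join a = {x\<in>A. same_fibre meet join x a}"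

text \<open>Transition map p_{ij}(a) = a \<and> (a \<or> b), for b in the fibre A_j.\<close>
definition plonka_p :: "('a \<Rightarrow> 'a \<Rightarrow> 'a) \<Rightarrow> ('a \<Rightarrow> 'a \<Rightarrow> 'a) \<Rightarrow> 'a \<Rightarrow> 'a \<Rightarrow> 'a"
  where "plonka_p meet join b a = meet a (join a b)"

definition is_fibre_top :: "'a set \<Rightarrow> ('a \<Rightarrow> 'a \<Rightarrow> 'a) \<Rightarrow> ('a \<Rightarrow> 'a \<Rightarrow> 'a) \<Rightarrow> 'a \<Rightarrow> bool"
  where "is_fibre_top A meet join t \<longleftrightarrow> t \<in> A \<and> (\<forall>x\<in>fibre A meet join t. meet x t = x)"

end

theory Submission
  imports Defs
begin

lemma lin_exists: "\<exists>r::'a rel. (\<forall>x y. (x,y)\<in>r \<or> (y,x)\<in>r) \<and> antisym r \<and> trans r"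
proof -
  obtain r :: "'a rel" where r1: "well_order_on (Field r) r" and r2: "Field r = UNIV"
    using well_ordering by (elim exE conjE)
  have lo: "linear_order_on (Field r) r" using r1 unfolding well_order_on_def by (rule conjunct1)
  have po: "partial_order_on (Field r) r" using lo unfolding linear_order_on_def by (rule conjunct1)
  have tot: "total_on (Field r) r" using lo unfolding linear_order_on_def by (rule conjunct2)
  have pre: "preorder_on (Field r) r" using po unfolding partial_order_on_def by (rule conjunct1)
  have AS: "antisym r" using po unfolding partial_order_on_def by (rule conjunct2)
  have rf: "refl_on (Field r) r" using pre unfolding preorder_on_def by (elim conjE)
  have TR: "trans r" using pre unfolding preorder_on_def by (elim conjE)
  have T: "(x,y)\<in>r \<or> (y,x)\<in>r" for x y
  proof (cases "x = y")
    case True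
    have "x \<in> Field r" unfolding r2 by (rule UNIV_I)
    then show ?thesis using refl_onD[OF rf] True by blast
  next
    case False
    have "x \<in> Field r" "y \<in> Field r" unfolding r2 by (rule UNIV_I)+
    then show ?thesis using tot False unfolding total_on_def by blast
  qed
  show ?thesis by (rule exI[of _ r]) (simp add: T AS TR)
qed

locale ib =
  fixes m j :: "'a \<Rightarrow> 'a \<Rightarrow> 'a" and n :: "'a \<Rightarrow> 'a" and z :: 'a
  assumes jid: "j x x = x"
  and jcom: "j x y = j y x"
  and jass: "j x (j y w) = j (j x y) w"
  and nn: "n (n x) = x"
  and mdef: "m x y = n (j (n x) (n y))"
  and ax: "m x (j (n x) y) = m x y"
  and zj: "j z x = x"
begin
lemma I2: "m x (j x y) = j x (m y (n y))"
  by (metis ax jass jcom jid mdef nn)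
lemma I3: "m (j x y) (n (j x y)) = j (m x (n x)) (m y (n y))"
  by (metis I2 ax jass jcom jid mdef nn zj)
lemma I4: "m (j x (m y (n y))) y = m x y"
  by (metis I2 ax jass jcom jid mdef nn)
end

lemma ext_I:
  fixes A :: "'a set" and m j :: "'a \<Rightarrow> 'a \<Rightarrow> 'a" and n :: "'a \<Rightarrow> 'a" and z :: 'a
  assumes z: "z \<in> A"
  and jc: "\<And>x y. x \<in> A \<Longrightarrow> y \<in> A \<Longrightarrow> j x y \<in> A"
  and nc: "\<And>x. x \<in> A \<Longrightarrow> n x \<in> A"
  and jid: "\<And>x. x \<in> A \<Longrightarrow> j x x = x"
  and jcom: "\<And>x y. x \<in> A \<Longrightarrow> y \<in> A \<Longrightarrow> j x y = j y x"
  and jass: "\<And>x y w. x \<in> A \<Longrightarrow> y \<in> A \<Longrightarrow> w \<in> A \<Longrightarrow> j x (j y w) = j (j x y) w"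
  and nn: "\<And>x. x \<in> A \<Longrightarrow> n (n x) = x"
  and mdef: "\<And>x y. x \<in> A \<Longrightarrow> y \<in> A \<Longrightarrow> m x y = n (j (n x) (n y))"
  and ax: "\<And>x y. x \<in> A \<Longrightarrow> y \<in> A \<Longrightarrow> m x (j (n x) y) = m x y"
  and zj: "\<And>x. x \<in> A \<Longrightarrow> j z x = x"
  and x: "x \<in> A" and y: "y \<in> A"
  shows "m (j x y) (n (j x y)) = j (m x (n x)) (m y (n y)) \<and> m x (j x y) = j x (m y (n y))
    \<and> m (j x (m y (n y))) y = m x y"
proof -
  obtain r :: "'a rel" where tot0: "\<forall>x y. (x,y)\<in>r \<or> (y,x)\<in>r" and as: "antisym r" and tr: "trans r"
    using lin_exists by (elim exE conjE)
  have tot: "(x,y)\<in>r \<or> (y,x)\<in>r" for x y by (rule tot0[rule_format])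
  have rr: "\<And>a b. (a,b)\<in>r \<Longrightarrow> (b,a)\<in>r \<Longrightarrow> a = b" using as by (simp add: antisym_def)
  have rt: "\<And>a b c. (a,b)\<in>r \<Longrightarrow> (b,c)\<in>r \<Longrightarrow> (a,c)\<in>r" using tr by (meson transD)
  define mx where "mx x y = (if (x,y) \<in> r then y else x)" for x y
  have mx_id: "mx a a = a" for a by (simp add: mx_def)
  have mx_com: "mx a b = mx b a" for a b
    unfolding mx_def using tot[of a b] rr[of a b] by auto
  have mx_ass: "mx a (mx b c) = mx (mx a b) c" for a b c
  proof (cases "(a,b)\<in>r"; cases "(b,c)\<in>r"; cases "(a,c)\<in>r")
  qed (simp_all add: mx_def, (metis rr rt tot)+)
  have mx_or: "mx a b = a \<or> mx a b = b" for a b by (simp add: mx_def)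
  define J2 where "J2 a b = (if a \<in> A \<and> b \<in> A then j a b else if a \<in> A then b else if b \<in> A then a else mx a b)" for a b
  define N2 where "N2 a = (if a \<in> A then n a else a)" for a
  define M2 where "M2 a b = N2 (J2 (N2 a) (N2 b))" for a b
  have J2j: "a \<in> A \<Longrightarrow> b \<in> A \<Longrightarrow> J2 a b = j a b" for a b by (simp add: J2_def)
  have J2l: "a \<in> A \<Longrightarrow> b \<notin> A \<Longrightarrow> J2 a b = b" for a b by (simp add: J2_def)
  have J2r: "a \<notin> A \<Longrightarrow> b \<in> A \<Longrightarrow> J2 a b = a" for a b by (simp add: J2_def)
  have J2m: "a \<notin> A \<Longrightarrow> b \<notin> A \<Longrightarrow> J2 a b = mx a b" for a b by (simp add: J2_def)
  have N2n: "a \<in> A \<Longrightarrow> N2 a = n a" for a by (simp add: N2_def)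
  have N2o: "a \<notin> A \<Longrightarrow> N2 a = a" for a by (simp add: N2_def)
  have mxA: "a \<notin> A \<Longrightarrow> b \<notin> A \<Longrightarrow> mx a b \<notin> A" for a b using mx_or[of a b] by auto
  have mcl: "a \<in> A \<Longrightarrow> b \<in> A \<Longrightarrow> m a b \<in> A" for a b using mdef nc jc by simp
  have M2eq: "a \<in> A \<Longrightarrow> b \<in> A \<Longrightarrow> M2 a b = m a b" for a b
    by (simp add: M2_def N2n J2j nc jc mdef)
  interpret ib M2 J2 N2 z
  proof
    show "J2 a a = a" for a by (cases "a \<in> A") (simp_all add: J2j J2m jid mx_id)
    show "J2 a b = J2 b a" for a b
      by (cases "a \<in> A"; cases "b \<in> A") (simp_all add: J2j J2l J2r J2m jcom mx_com)
    show "J2 a (J2 b c) = J2 (J2 a b) c" for a b c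
      by (cases "a \<in> A"; cases "b \<in> A"; cases "c \<in> A") (simp_all add: J2j J2l J2r J2m jass jc mx_ass mxA)
    show "N2 (N2 a) = a" for a by (cases "a \<in> A") (simp_all add: N2n N2o nc nn)
    show "M2 a b = N2 (J2 (N2 a) (N2 b))" for a b by (simp add: M2_def)
    show "J2 z a = a" for a by (cases "a \<in> A") (simp_all add: J2j J2l z zj)
    show "M2 a (J2 (N2 a) b) = M2 a b" for a b
    proof (cases "a \<in> A"; cases "b \<in> A")
      assume a: "a \<in> A" and b: "b \<in> A"
      then show ?thesis using M2eq ax by (simp add: N2n J2j nc jc)
    next
      assume a: "a \<in> A" and b: "b \<notin> A"
      then show ?thesis by (simp add: N2n J2l nc)
    next
      assume a: "a \<notin> A" and b: "b \<in> A"
      then show ?thesis by (simp add: M2_def N2n N2o J2r J2m nc mx_id)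
    next
      assume a: "a \<notin> A" and b: "b \<notin> A"
      then show ?thesis by (simp add: M2_def N2o J2m mxA mx_ass mx_id)
    qed
  qed
  have "M2 (J2 x y) (N2 (J2 x y)) = J2 (M2 x (N2 x)) (M2 y (N2 y))" by (rule I3)
  moreover have "M2 x (J2 x y) = J2 x (M2 y (N2 y))" by (rule I2)
  moreover have "M2 (J2 x (M2 y (N2 y))) y = M2 x y" by (rule I4)
  ultimately show ?thesis using x y by (simp add: M2eq J2j N2n jc nc mcl)
qed

locale ibs =
  fixes A :: "'a set" and m j :: "'a \<Rightarrow> 'a \<Rightarrow> 'a" and n :: "'a \<Rightarrow> 'a" and z u :: 'a
  assumes IB: "inv_bisemilattice A m j n z u"
begin
lemma z: "z \<in> A" using IB unfolding inv_bisemilattice_def by (elim conjE)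
lemma mc: "x \<in> A \<Longrightarrow> y \<in> A \<Longrightarrow> m x y \<in> A" using IB unfolding inv_bisemilattice_def by (elim conjE, blast)
lemma jc: "x \<in> A \<Longrightarrow> y \<in> A \<Longrightarrow> j x y \<in> A" using IB unfolding inv_bisemilattice_def by (elim conjE, blast)
lemma nc: "x \<in> A \<Longrightarrow> n x \<in> A" using IB unfolding inv_bisemilattice_def by (elim conjE, blast)
lemma jid: "x \<in> A \<Longrightarrow> j x x = x" using IB unfolding inv_bisemilattice_def by (elim conjE, blast)
lemma jcom: "x \<in> A \<Longrightarrow> y \<in> A \<Longrightarrow> j x y = j y x" using IB unfolding inv_bisemilattice_def by (elim conjE, blast)
lemma jass: "x \<in> A \<Longrightarrow> y \<in> A \<Longrightarrow> w \<in> A \<Longrightarrow> j x (j y w) = j (j x y) w" using IB unfolding inv_bisemilattice_def by (elim conjE, blast)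
lemma nn: "x \<in> A \<Longrightarrow> n (n x) = x" using IB unfolding inv_bisemilattice_def by (elim conjE, blast)
lemma mdef: "x \<in> A \<Longrightarrow> y \<in> A \<Longrightarrow> m x y = n (j (n x) (n y))" using IB unfolding inv_bisemilattice_def by (elim conjE, blast)
lemma ax: "x \<in> A \<Longrightarrow> y \<in> A \<Longrightarrow> m x (j (n x) y) = m x y" using IB unfolding inv_bisemilattice_def by (elim conjE, blast)
lemma zj: "x \<in> A \<Longrightarrow> j z x = x" using IB unfolding inv_bisemilattice_def by (elim conjE, blast)
lemma udef: "u = n z" using IB unfolding inv_bisemilattice_def by (elim conjE)

lemma uA: "u \<in> A" by (simp add: nc udef z)
lemma mid: "x \<in> A \<Longrightarrow> m x x = x" by (simp add: jid mdef nc nn)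
lemma mcom: "x \<in> A \<Longrightarrow> y \<in> A \<Longrightarrow> m x y = m y x" by (simp add: jcom mdef nc)
lemma um: "x \<in> A \<Longrightarrow> m u x = x" by (simp add: mdef nc nn udef z zj)

lemma nj: "x \<in> A \<Longrightarrow> y \<in> A \<Longrightarrow> n (j x y) = m (n x) (n y)" by (simp add: mdef nc nn)
lemma nm: "x \<in> A \<Longrightarrow> y \<in> A \<Longrightarrow> n (m x y) = j (n x) (n y)"
proof -
  assume x: "x \<in> A" and y: "y \<in> A"
  have "n (m x y) = n (n (j (n x) (n y)))" by (simp only: mdef[OF x y])
  also have "\<dots> = j (n x) (n y)" by (rule nn[OF jc[OF nc[OF x] nc[OF y]]])
  finally show ?thesis .
qed
lemma mass: "x \<in> A \<Longrightarrow> y \<in> A \<Longrightarrow> w \<in> A \<Longrightarrow> m x (m y w) = m (m x y) w"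
proof -
  assume x: "x \<in> A" and y: "y \<in> A" and w: "w \<in> A"
  have "m x (m y w) = n (j (n x) (n (m y w)))" by (rule mdef[OF x mc[OF y w]])
  also have "\<dots> = n (j (n x) (j (n y) (n w)))" by (simp only: nm[OF y w])
  also have "\<dots> = n (j (j (n x) (n y)) (n w))" by (simp only: jass[OF nc[OF x] nc[OF y] nc[OF w]])
  also have "\<dots> = n (j (n (m x y)) (n w))" by (simp only: nm[OF x y])
  also have "\<dots> = m (m x y) w" by (rule mdef[OF mc[OF x y] w, symmetric])
  finally show ?thesis .
qed
lemma axd: "x \<in> A \<Longrightarrow> y \<in> A \<Longrightarrow> j x (m (n x) y) = j x y"
proof -
  assume x: "x \<in> A" and y: "y \<in> A"
  have nx: "n x \<in> A" and ny: "n y \<in> A" using nc x y by auto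
  have c: "j x (m (n x) y) \<in> A" using jc[OF x mc[OF nx y]] .
  have "n (j x (m (n x) y)) = m (n x) (n (m (n x) y))" by (rule nj[OF x mc[OF nx y]])
  also have "\<dots> = m (n x) (j (n (n x)) (n y))" by (simp only: nm[OF nx y])
  also have "\<dots> = m (n x) (n y)" by (rule ax[OF nx ny])
  also have "\<dots> = n (j x y)" by (rule nj[OF x y, symmetric])
  finally have "n (n (j x (m (n x) y))) = n (n (j x y))" by (rule arg_cong)
  then show ?thesis by (simp only: nn[OF c] nn[OF jc[OF x y]])
qed
lemma I1: "x \<in> A \<Longrightarrow> j x (m x (n x)) = x"
proof -
  assume x: "x \<in> A"
  have "j x (m x (n x)) = j x (m (n x) x)" by (simp only: mcom[OF x nc[OF x]])
  also have "\<dots> = j x x" by (rule axd[OF x x])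
  also have "\<dots> = x" by (rule jid[OF x])
  finally show ?thesis .
qed
lemma I2: "x \<in> A \<Longrightarrow> y \<in> A \<Longrightarrow> m x (j x y) = j x (m y (n y))"
  using ext_I[where A=A and m=m and j=j and n=n and z=z, OF z jc nc jid jcom jass nn mdef ax zj] by blast
lemma I3: "x \<in> A \<Longrightarrow> y \<in> A \<Longrightarrow> m (j x y) (n (j x y)) = j (m x (n x)) (m y (n y))"
  using ext_I[where A=A and m=m and j=j and n=n and z=z, OF z jc nc jid jcom jass nn mdef ax zj] by blast
lemma I4: "w \<in> A \<Longrightarrow> y \<in> A \<Longrightarrow> m (j w (m y (n y))) y = m w y"
  using ext_I[where A=A and m=m and j=j and n=n and z=z, OF z jc nc jid jcom jass nn mdef ax zj] by blast
lemma I8: "x \<in> A \<Longrightarrow> m x z = m x (n x)"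
  by (metis ax jcom nc z zj)
lemma I6: "x \<in> A \<Longrightarrow> m x (m x (n x)) = m x (n x)"
  by (simp add: mass mid nc)
lemma I7: "x \<in> A \<Longrightarrow> m (m x (n x)) (n (m x (n x))) = m x (n x)"
proof -
  assume x: "x \<in> A"
  have "m (m x (n x)) (n (m x (n x))) = m (m x (n x)) z" using I8[of "m x (n x)"] x mc nc by simp
  also have "\<dots> = m x (m (n x) z)" using mass x nc z by simp
  also have "\<dots> = m x (m (n x) x)" using I8[of "n x"] x nc nn by simp
  also have "\<dots> = m x (n x)" using mass mid mcom x nc by metis
  finally show ?thesis .
qed

definition zf where "zf x = m x (n x)"

lemma zfc: "x \<in> A \<Longrightarrow> zf x \<in> A" by (simp add: zf_def mc nc)
lemma zfzf: "x \<in> A \<Longrightarrow> zf (zf x) = zf x" using I7 by (simp add: zf_def)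
lemma zfj: "x \<in> A \<Longrightarrow> y \<in> A \<Longrightarrow> zf (j x y) = j (zf x) (zf y)" using I3 by (simp add: zf_def)

lemma sf_iff: assumes "x \<in> A" "y \<in> A" shows "same_fibre m j x y \<longleftrightarrow> zf x = zf y"
proof
  assume "same_fibre m j x y"
  then have h1: "m x (j x y) = x" and h2: "m y (j y x) = y" by (auto simp: same_fibre_def)
  have I2': "m a (j a b) = j a (zf b)" if "a \<in> A" "b \<in> A" for a b
    using I2[OF that] unfolding zf_def .
  have "zf x = zf (m x (j x y))" by (simp only: h1)
  also have "\<dots> = zf (j x (zf y))" by (simp only: I2'[OF assms])
  also have "\<dots> = j (zf x) (zf (zf y))" by (rule zfj[OF assms(1) zfc[OF assms(2)]])
  also have "\<dots> = j (zf x) (zf y)" by (simp only: zfzf[OF assms(2)])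
  finally have ex: "zf x = j (zf x) (zf y)" .
  have "zf y = zf (m y (j y x))" by (simp only: h2)
  also have "\<dots> = zf (j y (zf x))" by (simp only: I2'[OF assms(2,1)])
  also have "\<dots> = j (zf y) (zf (zf x))" by (rule zfj[OF assms(2) zfc[OF assms(1)]])
  also have "\<dots> = j (zf y) (zf x)" by (simp only: zfzf[OF assms(1)])
  finally have ey: "zf y = j (zf y) (zf x)" .
  show "zf x = zf y" using ex ey jcom[OF zfc[OF assms(1)] zfc[OF assms(2)]] by simp
next
  assume e: "zf x = zf y"
  have I2': "m a (j a b) = j a (zf b)" if "a \<in> A" "b \<in> A" for a b
    using I2[OF that] unfolding zf_def .
  have I1': "j a (zf a) = a" if "a \<in> A" for a
    using I1[OF that] unfolding zf_def .
  have "m x (j x y) = x" using I2'[OF assms] e[symmetric] I1'[OF assms(1)] by simp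
  moreover have "m y (j y x) = y" using I2'[OF assms(2,1)] e I1'[OF assms(2)] by simp
  ultimately show "same_fibre m j x y" unfolding same_fibre_def by (rule conjI)
qed

lemma zfz: "zf z = z" using I8[OF z] mid[OF z] by (simp add: zf_def)
lemma zfu: "zf u = z" using I8[OF uA] um[OF z] by (simp add: zf_def)



lemma fib_iff: "x \<in> fibre A m j a \<longleftrightarrow> x \<in> A \<and> zf x = zf a" if "a \<in> A"
  using sf_iff that by (auto simp: fibre_def)

lemma fle_iff: "a \<in> A \<Longrightarrow> b \<in> A \<Longrightarrow> fibre_le m j a b \<longleftrightarrow> j (zf a) (zf b) = zf b"
  unfolding fibre_le_def using sf_iff zfj jc by simp

context
  fixes J assumes Jc: "\<And>x. x \<in> A \<Longrightarrow> J x \<in> A"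
  and J1: "\<And>x. x \<in> A \<Longrightarrow> j (J x) (n (J x)) = u"
  and J2: "\<And>x y. x \<in> A \<Longrightarrow> y \<in> A \<Longrightarrow> j x (J y) = j x (J (j x y))"
  and J3: "\<And>x. x \<in> A \<Longrightarrow> m x (J x) = x"
  and J4: "\<And>x. x \<in> A \<Longrightarrow> J (m x (n x)) = z"
begin

lemma zfJ: "x \<in> A \<Longrightarrow> zf (J x) = z"
proof -
  assume x: "x \<in> A"
  have "zf (J x) = n (j (n (J x)) (J x))" using Jc x nc nn by (simp add: zf_def mdef)
  also have "\<dots> = n u" using J1 x jcom Jc nc by metis
  finally show ?thesis by (simp add: udef nn z)
qed

lemma Jrec: "y \<in> A \<Longrightarrow> j (J y) (zf y) = y"
proof -
  assume y: "y \<in> A"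
  have "j y (J (zf y)) = j y (J (j y (zf y)))" using J2 y zfc by blast
  then have "j y (J y) = y" using J4 y I1 zj jcom z by (simp add: zf_def)
  then have "j (J y) (zf y) = m (J y) y" using I2[of "J y" y] Jc y jcom by (simp add: zf_def)
  then show ?thesis using J3 y mcom Jc by metis
qed

lemma surj_p: assumes a: "a \<in> A" and b: "b \<in> A" and le: "fibre_le m j a b"
  shows "plonka_p m j b ` fibre A m j a = fibre A m j b"
proof
  have e: "j (zf a) (zf b) = zf b" using le fle_iff a b by blast
  show "plonka_p m j b ` fibre A m j a \<subseteq> fibre A m j b"
  proof
    fix y assume "y \<in> plonka_p m j b ` fibre A m j a"
    then obtain x where x: "x \<in> A" "zf x = zf a" and y: "y = m x (j x b)"
      using fib_iff a by (auto simp: plonka_p_def)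
    have "y = j x (zf b)" using y I2 x b by (simp add: zf_def)
    then have "y \<in> A" "zf y = zf b" using x b zfc jc zfj zfzf e by auto
    then show "y \<in> fibre A m j b" using fib_iff b by blast
  qed
  show "fibre A m j b \<subseteq> plonka_p m j b ` fibre A m j a"
  proof
    fix y assume "y \<in> fibre A m j b"
    then have y: "y \<in> A" "zf y = zf b" using fib_iff b by auto
    define x where "x = j (J y) (zf a)"
    have xA: "x \<in> A" using x_def Jc y a zfc jc by simp
    have "zf x = zf a" using x_def zfj Jc y a zfc zfJ zfzf zj by simp
    then have xf: "x \<in> fibre A m j a" using fib_iff a xA by blast
    have "plonka_p m j b x = j x (zf b)" using I2 xA b by (simp add: plonka_p_def zf_def)
    also have "\<dots> = j (J y) (j (zf a) (zf b))" using x_def jass Jc y a b zfc by simp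
    also have "\<dots> = y" using e y Jrec[OF y(1)] by metis
    finally show "y \<in> plonka_p m j b ` fibre A m j a" using xf by force
  qed
qed

lemma J_unique:
  assumes c2: "card (fibre A m j z) = 2" and a: "a \<in> A"
  shows "J a = (if is_fibre_top A m j a \<and> card (fibre A m j a) \<noteq> 1 then u else z)"
proof -
  have F: "fibre A m j z = {x \<in> A. zf x = z}" using fib_iff z zfz by auto
  have zu: "z \<noteq> u"
  proof
    assume zu: "z = u"
    have "fibre A m j z \<noteq> {z}" using c2 by auto
    moreover have "z \<in> fibre A m j z" using F z zfz by auto
    ultimately obtain c where c: "c \<in> A" "zf c = z" "c \<noteq> z" using F by blast
    have "c = m u c" using um c by simp
    also have "\<dots> = m c z" using zu mcom c z by simp
    also have "\<dots> = z" using I8 c by (simp add: zf_def)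
    finally show False using c by simp
  qed
  have FE: "fibre A m j z = {z, u}"
  proof -
    have "{z,u} \<subseteq> fibre A m j z" using F z uA zfz zfu by auto
    moreover have "card {z,u} = 2" using zu by simp
    moreover have "finite (fibre A m j z)" using c2 card.infinite by fastforce
    ultimately show ?thesis using c2 card_subset_eq by metis
  qed
  have "J a \<in> {z, u}" using FE F Jc a zfJ by auto
  moreover have rec: "j (J a) (zf a) = a" using Jrec a by simp
  have aF: "a \<in> fibre A m j a" using fib_iff a by simp
  moreover {
    assume Jz: "J a = z"
    then have az: "a = zf a" using rec zj a zfc by simp
    have "\<not> (is_fibre_top A m j a \<and> card (fibre A m j a) \<noteq> 1)"
    proof
      assume "is_fibre_top A m j a \<and> card (fibre A m j a) \<noteq> 1"
      then have top: "\<forall>x\<in>fibre A m j a. m x a = x" and c: "card (fibre A m j a) \<noteq> 1"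
        by (auto simp: is_fibre_top_def)
      have "fibre A m j a \<subseteq> {a}"
      proof
        fix x assume xf: "x \<in> fibre A m j a"
        then have x: "x \<in> A" "zf x = zf a" using fib_iff a by auto
        have "x = m x a" using top xf by simp
        also have "\<dots> = m x (zf x)" using az x by simp
        also have "\<dots> = zf x" using I6[OF x(1)] by (simp only: zf_def)
        finally show "x \<in> {a}" using x az by simp
      qed
      then have "fibre A m j a = {a}" using aF by blast
      then show False using c by simp
    qed
    then have ?thesis using Jz zu by simp
  }
  moreover {
    assume Ju: "J a = u"
    have top: "is_fibre_top A m j a" unfolding is_fibre_top_def
    proof (intro conjI ballI)
      show "a \<in> A" using a .
      fix x assume xf: "x \<in> fibre A m j a"
      then have x: "x \<in> A" "zf x = zf a" using fib_iff a by auto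
      have "m x a = m x (j u (zf x))" using rec Ju x by simp
      also have "\<dots> = m (j u (zf x)) x" using mcom x(1) uA zfc jc by metis
      also have "\<dots> = m u x" using I4[OF uA x(1)] by (simp only: zf_def)
      also have "\<dots> = x" using um x by simp
      finally show "m x a = x" .
    qed
    have "card (fibre A m j a) \<noteq> 1"
    proof
      assume "card (fibre A m j a) = 1"
      then obtain b where b: "fibre A m j a = {b}" using card_1_singletonE by blast
      have "zf a \<in> fibre A m j a" using fib_iff a zfc zfzf by simp
      then have "zf a = a" using aF b by simp
      then have "J a = z" using J4 a by (metis zf_def)
      then show False using Ju zu by simp
    qed
    then have ?thesis using Ju top by simp
  }
  ultimately show ?thesis by blast
qed

end

end

lemma K_inv: "K_alg A m j n J z u \<Longrightarrow> inv_bisemilattice A m j n z u"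
  unfolding K_alg_def inv_bisemilattice_def by (elim conjE) (intro conjI; assumption)
lemma KJ1: assumes "K_alg A m j n J z u" "x \<in> A" shows "J x \<in> A"
proof -
  have "\<forall>x\<in>A. J x \<in> A" using assms(1) unfolding K_alg_def by (elim conjE) assumption
  then show ?thesis using assms(2) by (rule bspec)
qed
lemma KJ2: assumes "K_alg A m j n J z u" "x \<in> A" shows "j (J x) (n (J x)) = u"
proof -
  have "\<forall>x\<in>A. j (J x) (n (J x)) = u" using assms(1) unfolding K_alg_def by (elim conjE) assumption
  then show ?thesis using assms(2) by (rule bspec)
qed
lemma KJ3: assumes "K_alg A m j n J z u" "x \<in> A" "y \<in> A" shows "j x (J y) = j x (J (j x y))"
proof -
  have "\<forall>x\<in>A. \<forall>y\<in>A. j x (J y) = j x (J (j x y))" using assms(1) unfolding K_alg_def by (elim conjE) assumption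
  then show ?thesis using assms(2,3) by blast
qed
lemma KJ4: assumes "K_alg A m j n J z u" "x \<in> A" shows "m x (J x) = x"
proof -
  have "\<forall>x\<in>A. m x (J x) = x" using assms(1) unfolding K_alg_def by (elim conjE) assumption
  then show ?thesis using assms(2) by (rule bspec)
qed
lemma KJ5: assumes "K_alg A m j n J z u" "x \<in> A" shows "J (m x (n x)) = z"
proof -
  have "\<forall>x\<in>A. J (m x (n x)) = z" using assms(1) unfolding K_alg_def by (elim conjE) assumption
  then show ?thesis using assms(2) by (rule bspec)
qed
lemma K_intro: "inv_bisemilattice A m j n z u \<Longrightarrow> \<forall>x\<in>A. J x \<in> A \<Longrightarrow>
    \<forall>x\<in>A. j (J x) (n (J x)) = u \<Longrightarrow> \<forall>x\<in>A. \<forall>y\<in>A. j x (J y) = j x (J (j x y)) \<Longrightarrow>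
    \<forall>x\<in>A. m x (J x) = x \<Longrightarrow> \<forall>x\<in>A. J (m x (n x)) = z \<Longrightarrow> K_alg A m j n J z u"
  unfolding K_alg_def inv_bisemilattice_def by (elim conjE) (intro conjI; assumption)

theorem lemma4p3:
  fixes A :: "'a set" and meet join :: "'a \<Rightarrow> 'a \<Rightarrow> 'a" and neg J :: "'a \<Rightarrow> 'a"
    and zero one :: 'a
  assumes K: "K_alg A meet join neg J zero one"
  shows "inv_bisemilattice A meet join neg zero one \<and>
    (\<forall>a\<in>A. \<forall>b\<in>A. fibre_le meet join a b \<longrightarrow>
           plonka_p meet join b ` fibre A meet join a = fibre A meet join b) \<and>
    (card (fibre A meet join zero) = 2 \<longrightarrow>
           K_alg A meet join neg
             (\<lambda>a. if is_fibre_top A meet join a \<and> card (fibre A meet join a) \<noteq> 1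
                  then one else zero) zero one \<and>
           (\<forall>J'. K_alg A meet join neg J' zero one \<longrightarrow>
              (\<forall>a\<in>A. J' a = (if is_fibre_top A meet join a \<and> card (fibre A meet join a) \<noteq> 1
                                then one else zero))))"
proof -
  interpret ibs A meet join neg zero one by (rule ibs.intro, rule K_inv[OF K])
  define f where "f = (\<lambda>a. if is_fibre_top A meet join a \<and> card (fibre A meet join a) \<noteq> 1
                  then one else zero)"
  have p1: "inv_bisemilattice A meet join neg zero one" by (rule K_inv[OF K])
  note KJ = KJ1[OF K] KJ2[OF K] KJ3[OF K] KJ4[OF K] KJ5[OF K]
  have p2: "\<forall>a\<in>A. \<forall>b\<in>A. fibre_le meet join a b \<longrightarrow>
           plonka_p meet join b ` fibre A meet join a = fibre A meet join b"
    by (intro ballI impI, rule surj_p[OF KJ], assumption+)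
  have uniq: "\<forall>a\<in>A. J' a = (if is_fibre_top A meet join a \<and> card (fibre A meet join a) \<noteq> 1
                                then one else zero)"
    if c2: "card (fibre A meet join zero) = 2"
    and K': "K_alg A meet join neg J' zero one" for J'
  proof
    fix a assume a: "a \<in> A"
    show "J' a = (if is_fibre_top A meet join a \<and> card (fibre A meet join a) \<noteq> 1
                                then one else zero)"
      by (rule J_unique[OF KJ1[OF K'] KJ2[OF K'] KJ3[OF K'] KJ4[OF K'] KJ5[OF K'] c2 a])
  qed
  have p3: "K_alg A meet join neg f zero one" if c2: "card (fibre A meet join zero) = 2"
  proof -
    have e: "\<forall>a\<in>A. J a = f a" using uniq[OF c2 K] unfolding f_def by simp
    have f1: "\<forall>x\<in>A. f x \<in> A" using e KJ(1) by metis
    have f2: "\<forall>x\<in>A. join (f x) (neg (f x)) = one" using e KJ(2) by metis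
    have f3: "\<forall>x\<in>A. \<forall>y\<in>A. join x (f y) = join x (f (join x y))"
    proof (intro ballI)
      fix x y assume x: "x \<in> A" and y: "y \<in> A"
      have "join x y \<in> A" using jc x y by simp
      then show "join x (f y) = join x (f (join x y))" using e KJ(3)[OF x y] x y by metis
    qed
    have f4: "\<forall>x\<in>A. meet x (f x) = x" using e KJ(4) by metis
    have f5: "\<forall>x\<in>A. f (meet x (neg x)) = zero"
    proof
      fix x assume x: "x \<in> A"
      have "meet x (neg x) \<in> A" using mc nc x by simp
      then show "f (meet x (neg x)) = zero" using e KJ(5)[OF x] by metis
    qed
    show ?thesis by (rule K_intro[OF p1 f1 f2 f3 f4 f5])
  qed
  show ?thesis
  proof (intro conjI impI)
    show "inv_bisemilattice A meet join neg zero one" by (rule p1)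
    show "\<forall>a\<in>A. \<forall>b\<in>A. fibre_le meet join a b \<longrightarrow>
           plonka_p meet join b ` fibre A meet join a = fibre A meet join b" by (rule p2)
    assume c2: "card (fibre A meet join zero) = 2"
    show "K_alg A meet join neg
             (\<lambda>a. if is_fibre_top A meet join a \<and> card (fibre A meet join a) \<noteq> 1
                  then one else zero) zero one" using p3[OF c2] by (simp only: f_def)
    show "\<forall>J'. K_alg A meet join neg J' zero one \<longrightarrow>
              (\<forall>a\<in>A. J' a = (if is_fibre_top A meet join a \<and> card (fibre A meet join a) \<noteq> 1
                                then one else zero))"
      using uniq[OF c2] by blast
  qed
qed

end
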